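(* Let $n\ge1$. Let $|\Psi\rangle=\frac{1}{\sqrt2}(|01\rangle+|10\rangle)$ on a pair of qubits (first qubit Bob's, second Charlie's). For $x\in\{0,1\}^n$ define the $2n$-qubit state $|\tilde x\rangle=\bigotimes_{i=1}^n|\tilde x_i\rangle$, where $|\tilde x_i\rangle=|00\rangle$ if $x_i=0$ and $|\tilde x_i\rangle=|\Psi\rangle$ if $x_i=1$, the $i$-th pair consisting of Bob's $i$-th qubit and Charlie's $i$-th qubit. Let $A$ be any operator on Bob's $n$ qubits, and write $|x\rangle$ for Bob's computational basis state labeled by $x$. Then: (i) For $x,y\in\{0,1\}^n$, let $S=\{b\in\{0,1\}^n: b_i=0 \text{ whenever } x_iy_i\ne1\}$. Then $\langle\tilde x|A\otimes\mathbb I|\tilde y\rangle=c_{x,y}\sum_{b\in S}\langle x+b|A|y+b\rangle$ for a nonzero constant $c_{x,y}$ independent of $A$ (addition mod 2 componentwise). (ii) If $\langle\tilde x|A\otimes\mathbb I|\tilde y\rangle=0$ for all $x\ne y\in\{0,1\}^n$, then $\langle x|A|y\rangle=0$ for all $x\neq y\in\{0,1\}^n$. (iii) If $\langle\tilde x|A\otimes\mathbb I|\tilde x\rangle=k$ for all $x\in\{0,1\}^n$, then $\langle x|A|x\rangle=k$ for all $x\in\{0,1\}^n$.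
   Context: $\mathbb I$ denotes the identity on Charlie's $n$ qubits. For binary strings, $x+b$ denotes componentwise addition modulo 2. *)

theory Defs
  imports Complex_Main
begin

text \<open>Bit strings in {0,1}^n are boolean lists of length n (False = 0, True = 1).
 Entry i of a list is the i-th qubit.\<close>

definition bitstrings :: "nat \<Rightarrow> bool list set" where
  "bitstrings n = {xs. length xs = n}"

definition xor_bits :: "bool list \<Rightarrow> bool list \<Rightarrow> bool list" where
  "xor_bits x b = map2 (\<lambda>p q. p \<noteq> q) x b"

text \<open>Amplitude of |Psi> = (|01> + |10>)/sqrt 2 at basis state |b c>
  (b = Bob's qubit, c = Charlie's qubit).\<close>
definition Psi_amp :: "bool \<Rightarrow> bool \<Rightarrow> complex" where
  "Psi_amp b c = (if b \<noteq> c then complex_of_real (1 / sqrt 2) else 0)"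

definition pair_amp :: "bool \<Rightarrow> bool \<Rightarrow> bool \<Rightarrow> complex" where
  "pair_amp xi b c = (if xi then Psi_amp b c else (if \<not> b \<and> \<not> c then 1 else 0))"

text \<open>Amplitude of the 2n-qubit state |x~> = tensor of the |x_i~> at the basis state
  where Bob's n qubits are u and Charlie's n qubits are w (the i-th pair is (u_i, w_i)).\<close>
definition tilde_amp :: "bool list \<Rightarrow> bool list \<Rightarrow> bool list \<Rightarrow> complex" where
  "tilde_amp x u w = (\<Prod>i<length x. pair_amp (x ! i) (u ! i) (w ! i))"

text \<open>An operator A on Bob's n qubits is given by its matrix entries A u v = <u|A|v>
  in the computational basis (u, v in {0,1}^n).
  tilde_elem n A x y = <x~| A \<otimes> I |y~>, where (A \<otimes> I) has entries
  <u,w| A\<otimes>I |v,w'> = A u v * [w = w'].\<close>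
definition tilde_elem ::
  "nat \<Rightarrow> (bool list \<Rightarrow> bool list \<Rightarrow> complex) \<Rightarrow> bool list \<Rightarrow> bool list \<Rightarrow> complex" where
  "tilde_elem n A x y =
     (\<Sum>u\<in>bitstrings n. \<Sum>v\<in>bitstrings n. \<Sum>w\<in>bitstrings n.
        cnj (tilde_amp x u w) * A u v * tilde_amp y v w)"

end

theory Submission
  imports Defs
begin

lemma fin_bs: "finite (bitstrings n)"
proof -
  have "bitstrings n = {xs::bool list. set xs \<subseteq> UNIV \<and> length xs = n}"
    by (auto simp: bitstrings_def)
  thus ?thesis using finite_lists_length_eq[of "UNIV::bool set" n] by simp
qed

lemma xor_len[simp]: "length (xor_bits x b) = min (length x) (length b)"
  by (simp add: xor_bits_def)

lemma xor_nth[simp]: "i < length x \<Longrightarrow> i < length b \<Longrightarrow> xor_bits x b ! i = (x ! i \<noteq> b ! i)"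
  by (simp add: xor_bits_def)

lemma pair_amp_nz: "pair_amp a p q \<noteq> 0 \<Longrightarrow> (a \<longrightarrow> p \<noteq> q) \<and> (\<not> a \<longrightarrow> \<not> p \<and> \<not> q)"
  by (auto simp: pair_amp_def Psi_amp_def split: if_splits)

lemma amp_nz:
  assumes "length u = length x" "length w = length x" "tilde_amp x u w \<noteq> 0"
  shows "u = xor_bits x w \<and> (\<forall>i<length x. w ! i \<longrightarrow> x ! i)"
proof -
  have h: "\<forall>i<length x. pair_amp (x ! i) (u ! i) (w ! i) \<noteq> 0"
    using assms(3) by (auto simp: tilde_amp_def prod_zero_iff)
  have "u = xor_bits x w"
    by (rule nth_equalityI) (use assms h pair_amp_nz in fastforce)+
  moreover have "\<forall>i<length x. w ! i \<longrightarrow> x ! i" using h pair_amp_nz by blast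
  ultimately show ?thesis by blast
qed

lemma amp_val:
  assumes "length w = length x" "\<forall>i<length x. w ! i \<longrightarrow> x ! i"
  shows "tilde_amp x (xor_bits x w) w = complex_of_real ((1 / sqrt 2) ^ card {i. i<length x \<and> x ! i})"
proof -
  have "tilde_amp x (xor_bits x w) w = (\<Prod>i<length x. if x ! i then complex_of_real (1 / sqrt 2) else 1)"
    unfolding tilde_amp_def
    by (rule prod.cong) (use assms in \<open>auto simp: pair_amp_def Psi_amp_def\<close>)
  also have "\<dots> = (\<Prod>i\<in>{..<length x} \<inter> {i. x ! i}. complex_of_real (1 / sqrt 2))"
    by (simp add: prod.If_cases)
  also have "{..<length x} \<inter> {i. x ! i} = {i. i<length x \<and> x ! i}" by auto
  finally show ?thesis by simp
qed

definition Sset :: "nat \<Rightarrow> bool list \<Rightarrow> bool list \<Rightarrow> bool list set" where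
  "Sset n x y = {b\<in>bitstrings n. \<forall>i<n. \<not> (x ! i \<and> y ! i) \<longrightarrow> \<not> b ! i}"

definition Cc :: "nat \<Rightarrow> bool list \<Rightarrow> bool list \<Rightarrow> complex" where
  "Cc n x y = complex_of_real ((1 / sqrt 2) ^ card {i. i<n \<and> x ! i} * (1 / sqrt 2) ^ card {i. i<n \<and> y ! i})"

lemma part_i:
  assumes x: "x \<in> bitstrings n" and y: "y \<in> bitstrings n"
  shows "tilde_elem n A x y = Cc n x y * (\<Sum>b\<in>Sset n x y. A (xor_bits x b) (xor_bits y b))"
proof -
  let ?B = "bitstrings n"
  let ?f = "\<lambda>u v w. cnj (tilde_amp x u w) * A u v * tilde_amp y v w"
  have lx: "length x = n" and ly: "length y = n" using x y by (auto simp: bitstrings_def)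
  have swap: "tilde_elem n A x y = (\<Sum>w\<in>?B. \<Sum>u\<in>?B. \<Sum>v\<in>?B. ?f u v w)"
  proof -
    have "tilde_elem n A x y = (\<Sum>u\<in>?B. \<Sum>w\<in>?B. \<Sum>v\<in>?B. ?f u v w)"
      unfolding tilde_elem_def by (rule sum.cong[OF refl], rule sum.swap)
    also have "\<dots> = (\<Sum>w\<in>?B. \<Sum>u\<in>?B. \<Sum>v\<in>?B. ?f u v w)"
      by (rule sum.swap)
    finally show ?thesis .
  qed
  have inner: "(\<Sum>u\<in>?B. \<Sum>v\<in>?B. ?f u v w) =
      (if w \<in> Sset n x y then Cc n x y * A (xor_bits x w) (xor_bits y w) else 0)"
    if w: "w \<in> ?B" for w
  proof -
    have lw: "length w = n" using w by (simp add: bitstrings_def)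
    have "(\<Sum>u\<in>?B. \<Sum>v\<in>?B. ?f u v w) =
        (\<Sum>u\<in>?B. if u = xor_bits x w then (\<Sum>v\<in>?B. if v = xor_bits y w then ?f u v w else 0) else 0)"
    proof (rule sum.cong[OF refl])
      fix u assume u: "u \<in> ?B"
      show "(\<Sum>v\<in>?B. ?f u v w) =
        (if u = xor_bits x w then (\<Sum>v\<in>?B. if v = xor_bits y w then ?f u v w else 0) else 0)"
      proof (cases "u = xor_bits x w")
        case True
        show ?thesis unfolding if_P[OF True]
        proof (rule sum.cong[OF refl])
          fix v assume v: "v \<in> ?B"
          show "?f u v w = (if v = xor_bits y w then ?f u v w else 0)"
            using amp_nz[of v y w] v lw ly by (auto simp: bitstrings_def)
        qed
      next
        case False
        hence "tilde_amp x u w = 0" using amp_nz[of u x w] u lw lx by (auto simp: bitstrings_def)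
        thus ?thesis using False by simp
      qed
    qed
    also have "\<dots> = ?f (xor_bits x w) (xor_bits y w) w"
    proof -
      have mem: "xor_bits x w \<in> ?B" "xor_bits y w \<in> ?B"
        using lw lx ly by (auto simp: bitstrings_def)
      show ?thesis by (simp add: sum.delta fin_bs mem)
    qed
    also have "\<dots> = (if w \<in> Sset n x y then Cc n x y * A (xor_bits x w) (xor_bits y w) else 0)"
    proof (cases "w \<in> Sset n x y")
      case True
      hence s: "\<forall>i<n. w ! i \<longrightarrow> x ! i" "\<forall>i<n. w ! i \<longrightarrow> y ! i"
        by (auto simp: Sset_def)
      show ?thesis using True amp_val[of w x] amp_val[of w y] s lw lx ly
        by (simp add: Cc_def)
    next
      case False
      have "tilde_amp x (xor_bits x w) w = 0 \<or> tilde_amp y (xor_bits y w) w = 0"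
      proof (rule ccontr)
        assume "\<not> ?thesis"
        hence "\<forall>i<n. w ! i \<longrightarrow> x ! i" "\<forall>i<n. w ! i \<longrightarrow> y ! i"
          using amp_nz[of "xor_bits x w" x w] amp_nz[of "xor_bits y w" y w] lw lx ly by auto
        thus False using False w by (auto simp: Sset_def)
      qed
      thus ?thesis using False by auto
    qed
    finally show ?thesis .
  qed
  have "tilde_elem n A x y = (\<Sum>w\<in>?B. if w \<in> Sset n x y then Cc n x y * A (xor_bits x w) (xor_bits y w) else 0)"
    unfolding swap by (rule sum.cong[OF refl]) (rule inner)
  also have "\<dots> = (\<Sum>w\<in>Sset n x y. Cc n x y * A (xor_bits x w) (xor_bits y w))"
    by (simp add: sum.inter_filter[symmetric] fin_bs Sset_def)
  finally show ?thesis by (simp add: sum_distrib_left)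
qed

lemma Cc_nz: "Cc n x y \<noteq> 0"
  by (simp add: Cc_def)


lemma zero_in: "replicate n False \<in> Sset n x y"
  by (simp add: Sset_def bitstrings_def)

lemma xor_zero: "length x = n \<Longrightarrow> xor_bits x (replicate n False) = x"
  by (rule nth_equalityI) auto

lemma nonzero_idx: "b \<in> bitstrings n \<Longrightarrow> b \<noteq> replicate n False \<Longrightarrow> \<exists>i<n. b ! i"
proof (rule ccontr)
  assume b: "b \<in> bitstrings n" "b \<noteq> replicate n False" "\<not> (\<exists>i<n. b ! i)"
  have "b = replicate n False"
    by (rule nth_equalityI) (use b in \<open>auto simp: bitstrings_def\<close>)
  thus False using b by simp
qed

lemma common_less:
  assumes x: "x \<in> bitstrings n" and y: "y \<in> bitstrings n" and b: "b \<in> Sset n x y"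
    and bz: "b \<noteq> replicate n False"
  shows "card {i. i<n \<and> xor_bits x b ! i \<and> xor_bits y b ! i} < card {i. i<n \<and> x ! i \<and> y ! i}"
proof -
  have lx: "length x = n" "length y = n" "length b = n"
    using x y b by (auto simp: bitstrings_def Sset_def)
  have bs: "\<forall>i<n. b ! i \<longrightarrow> x ! i \<and> y ! i" using b by (auto simp: Sset_def)
  have bB: "b \<in> bitstrings n" using b by (simp add: Sset_def)
  obtain i where i: "i < n" "b ! i" using nonzero_idx[OF bB bz] by blast
  let ?L = "{i. i<n \<and> xor_bits x b ! i \<and> xor_bits y b ! i}"
  let ?R = "{i. i<n \<and> x ! i \<and> y ! i}"
  have sub: "?L \<subseteq> ?R"
  proof
    fix j assume j: "j \<in> ?L"
    hence jn: "j < n" by simp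
    have "(x ! j \<noteq> b ! j) \<and> (y ! j \<noteq> b ! j)" using j jn lx by simp
    moreover have "b ! j \<longrightarrow> x ! j \<and> y ! j" using bs jn by blast
    ultimately show "j \<in> ?R" using jn by blast
  qed
  have iR: "i \<in> ?R" using bs i by blast
  have iL: "i \<notin> ?L" using i lx iR by simp
  have "?L \<subset> ?R" using sub iR iL by blast
  thus ?thesis by (rule psubset_card_mono[rotated]) simp
qed

lemma xor_inj: "length x = n \<Longrightarrow> length y = n \<Longrightarrow> length b = n \<Longrightarrow> xor_bits x b = xor_bits y b \<Longrightarrow> x = y"
proof (rule nth_equalityI)
  fix i assume "length x = n" "length y = n" "length b = n" "xor_bits x b = xor_bits y b" "i < length x"
  thus "x ! i = y ! i" by (metis xor_nth)
qed simp

lemma part_ii: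
  assumes H: "\<forall>x\<in>bitstrings n. \<forall>y\<in>bitstrings n. x \<noteq> y \<longrightarrow> tilde_elem n A x y = 0"
  shows "\<forall>x\<in>bitstrings n. \<forall>y\<in>bitstrings n. x \<noteq> y \<longrightarrow> A x y = 0"
proof -
  have "\<forall>x y. x \<in> bitstrings n \<longrightarrow> y \<in> bitstrings n \<longrightarrow> x \<noteq> y \<longrightarrow>
          card {i. i<n \<and> x ! i \<and> y ! i} = m \<longrightarrow> A x y = 0" for m
  proof (induction m rule: less_induct)
    case (less m)
    show ?case
    proof (intro allI impI)
      fix x y assume x: "x \<in> bitstrings n" and y: "y \<in> bitstrings n" and xy: "x \<noteq> y"
        and m: "card {i. i<n \<and> x ! i \<and> y ! i} = m"
      have lx: "length x = n" "length y = n" using x y by (auto simp: bitstrings_def)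
      let ?z = "replicate n False"
      have fin: "finite (Sset n x y)" using fin_bs by (simp add: Sset_def)
      have "0 = (\<Sum>b\<in>Sset n x y. A (xor_bits x b) (xor_bits y b))"
        using H x y xy part_i[OF x y, of A] Cc_nz[of n x y] by simp
      also have "\<dots> = A x y + (\<Sum>b\<in>Sset n x y - {?z}. A (xor_bits x b) (xor_bits y b))"
        using sum.remove[OF fin zero_in, of "\<lambda>b. A (xor_bits x b) (xor_bits y b)"] lx by (simp add: xor_zero)
      also have "(\<Sum>b\<in>Sset n x y - {?z}. A (xor_bits x b) (xor_bits y b)) = 0"
      proof (rule sum.neutral, rule ballI)
        fix b assume b: "b \<in> Sset n x y - {?z}"
        have lb: "length b = n" using b by (auto simp: Sset_def bitstrings_def)
        have "xor_bits x b \<noteq> xor_bits y b" using xor_inj[of x n y b] lx lb xy by auto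
        moreover have "xor_bits x b \<in> bitstrings n" "xor_bits y b \<in> bitstrings n"
          using lx lb by (auto simp: bitstrings_def)
        moreover have "card {i. i<n \<and> xor_bits x b ! i \<and> xor_bits y b ! i} < m"
          using common_less[OF x y] b m by auto
        ultimately show "A (xor_bits x b) (xor_bits y b) = 0" using less.IH by blast
      qed
      finally show "A x y = 0" by simp
    qed
  qed
  thus ?thesis by blast
qed

lemma card_S:
  assumes x: "x \<in> bitstrings n"
  shows "card (Sset n x x) = 2 ^ card {i. i<n \<and> x ! i}"
proof -
  let ?X = "{i. i<n \<and> x ! i}"
  have "bij_betw (\<lambda>b. {i. i<n \<and> b ! i}) (Sset n x x) (Pow ?X)"
  proof (rule bij_betw_imageI)
    show "inj_on (\<lambda>b. {i. i<n \<and> b ! i}) (Sset n x x)"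
    proof (rule inj_onI)
      fix a b assume a: "a \<in> Sset n x x" and b: "b \<in> Sset n x x"
        and e: "{i. i<n \<and> a ! i} = {i. i<n \<and> b ! i}"
      show "a = b"
      proof (rule nth_equalityI)
        show "length a = length b" using a b by (auto simp: Sset_def bitstrings_def)
        fix i assume "i < length a"
        hence "i < n" using a by (auto simp: Sset_def bitstrings_def)
        thus "a ! i = b ! i" using e by blast
      qed
    qed
    show "(\<lambda>b. {i. i<n \<and> b ! i}) ` Sset n x x = Pow ?X"
    proof
      show "(\<lambda>b. {i. i<n \<and> b ! i}) ` Sset n x x \<subseteq> Pow ?X"
        by (auto simp: Sset_def)
      show "Pow ?X \<subseteq> (\<lambda>b. {i. i<n \<and> b ! i}) ` Sset n x x"
      proof
        fix I assume I: "I \<in> Pow ?X"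
        let ?b = "map (\<lambda>i. i \<in> I) [0..<n]"
        have b1: "?b \<in> Sset n x x" using I by (auto simp: Sset_def bitstrings_def)
        have b2: "{i. i<n \<and> ?b ! i} = I" using I by auto
        show "I \<in> (\<lambda>b. {i. i<n \<and> b ! i}) ` Sset n x x" by (rule image_eqI[where f="\<lambda>b. {i. i<n \<and> b ! i}", OF b2[symmetric] b1])
      qed
    qed
  qed
  hence "card (Sset n x x) = card (Pow ?X)" by (rule bij_betw_same_card)
  thus ?thesis by (simp add: card_Pow)
qed

lemma Cc_diag: "Cc n x x = (1/2) ^ card {i. i<n \<and> x ! i}"
proof -
  have "((1 / sqrt 2) ^ m * (1 / sqrt 2) ^ m :: real) = (1/2) ^ m" for m
    by (simp add: power_mult_distrib[symmetric] power_divide)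
  thus ?thesis by (simp add: Cc_def)
qed

lemma part_iii:
  assumes H: "\<forall>x\<in>bitstrings n. tilde_elem n A x x = k"
  shows "\<forall>x\<in>bitstrings n. A x x = k"
proof -
  have "\<forall>x. x \<in> bitstrings n \<longrightarrow> card {i. i<n \<and> x ! i} = m \<longrightarrow> A x x = k" for m
  proof (induction m rule: less_induct)
    case (less m)
    show ?case
    proof (intro allI impI)
      fix x assume x: "x \<in> bitstrings n" and m: "card {i. i<n \<and> x ! i} = m"
      have lx: "length x = n" using x by (auto simp: bitstrings_def)
      let ?z = "replicate n False"
      have fin: "finite (Sset n x x)" using fin_bs by (simp add: Sset_def)
      have cS: "card (Sset n x x) = 2 ^ m" using card_S[OF x] m by simp
      have "k = (1/2) ^ m * (\<Sum>b\<in>Sset n x x. A (xor_bits x b) (xor_bits x b))"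
        using H x part_i[OF x x, of A] Cc_diag[of n x] m by simp
      also have "(\<Sum>b\<in>Sset n x x. A (xor_bits x b) (xor_bits x b))
          = A x x + (\<Sum>b\<in>Sset n x x - {?z}. A (xor_bits x b) (xor_bits x b))"
        using sum.remove[OF fin zero_in, of "\<lambda>b. A (xor_bits x b) (xor_bits x b)"] lx by (simp add: xor_zero)
      also have "(\<Sum>b\<in>Sset n x x - {?z}. A (xor_bits x b) (xor_bits x b)) = (\<Sum>b\<in>Sset n x x - {?z}. k)"
      proof (rule sum.cong[OF refl])
        fix b assume b: "b \<in> Sset n x x - {?z}"
        have lb: "length b = n" using b by (auto simp: Sset_def bitstrings_def)
        have "xor_bits x b \<in> bitstrings n"
          using lx lb by (auto simp: bitstrings_def)
        moreover have "card {i. i<n \<and> xor_bits x b ! i} < m"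
          using common_less[OF x x, of b] b m by auto
        ultimately show "A (xor_bits x b) (xor_bits x b) = k" using less.IH by blast
      qed
      also have "\<dots> = (2 ^ m - 1) * k"
        using cS fin zero_in[of n x x] by (simp add: card_Diff_singleton of_nat_diff)
      finally have e: "k = (1/2) ^ m * (A x x + (2 ^ m - 1) * k)" .
      have "(2::complex) ^ m * ((1/2) ^ m) = 1" by (simp add: power_mult_distrib[symmetric])
      have "(2::complex) ^ m * k = 2 ^ m * ((1/2) ^ m * (A x x + (2 ^ m - 1) * k))"
        using e by (rule arg_cong)
      also have "\<dots> = ((2::complex) ^ m * (1/2) ^ m) * (A x x + (2 ^ m - 1) * k)"
        by (simp only: mult.assoc)
      also have "\<dots> = A x x + (2 ^ m - 1) * k" using \<open>(2::complex) ^ m * ((1/2) ^ m) = 1\<close> by simp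
      finally have "(2::complex) ^ m * k = A x x + (2 ^ m - 1) * k" .
      thus "A x x = k" by (simp add: algebra_simps)
    qed
  qed
  thus ?thesis by blast
qed

theorem lemma2:
  fixes n :: nat
  assumes "n \<ge> 1"
  shows
   "(\<forall>x\<in>bitstrings n. \<forall>y\<in>bitstrings n.
       \<exists>c::complex. c \<noteq> 0 \<and>
         (\<forall>A :: bool list \<Rightarrow> bool list \<Rightarrow> complex.
            tilde_elem n A x y =
              c * (\<Sum>b\<in>{b\<in>bitstrings n. \<forall>i<n. \<not> (x ! i \<and> y ! i) \<longrightarrow> \<not> b ! i}.
                      A (xor_bits x b) (xor_bits y b))))
    \<and> (\<forall>A :: bool list \<Rightarrow> bool list \<Rightarrow> complex.
         (\<forall>x\<in>bitstrings n. \<forall>y\<in>bitstrings n. x \<noteq> y \<longrightarrow> tilde_elem n A x y = 0) \<longrightarrow>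
         (\<forall>x\<in>bitstrings n. \<forall>y\<in>bitstrings n. x \<noteq> y \<longrightarrow> A x y = 0))
    \<and> (\<forall>(A :: bool list \<Rightarrow> bool list \<Rightarrow> complex) (k::complex).
         (\<forall>x\<in>bitstrings n. tilde_elem n A x x = k) \<longrightarrow>
         (\<forall>x\<in>bitstrings n. A x x = k))"
proof (intro conjI)
  show "\<forall>x\<in>bitstrings n. \<forall>y\<in>bitstrings n.
       \<exists>c::complex. c \<noteq> 0 \<and>
         (\<forall>A :: bool list \<Rightarrow> bool list \<Rightarrow> complex.
            tilde_elem n A x y =
              c * (\<Sum>b\<in>{b\<in>bitstrings n. \<forall>i<n. \<not> (x ! i \<and> y ! i) \<longrightarrow> \<not> b ! i}.
                      A (xor_bits x b) (xor_bits y b)))"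
  proof (intro ballI)
    fix x y assume x: "x \<in> bitstrings n" and y: "y \<in> bitstrings n"
    show "\<exists>c::complex. c \<noteq> 0 \<and>
         (\<forall>A :: bool list \<Rightarrow> bool list \<Rightarrow> complex.
            tilde_elem n A x y =
              c * (\<Sum>b\<in>{b\<in>bitstrings n. \<forall>i<n. \<not> (x ! i \<and> y ! i) \<longrightarrow> \<not> b ! i}.
                      A (xor_bits x b) (xor_bits y b)))"
    proof (rule exI[of _ "Cc n x y"], intro conjI allI)
      show "Cc n x y \<noteq> 0" by (rule Cc_nz)
      fix A
      show "tilde_elem n A x y =
              Cc n x y * (\<Sum>b\<in>{b\<in>bitstrings n. \<forall>i<n. \<not> (x ! i \<and> y ! i) \<longrightarrow> \<not> b ! i}.
                      A (xor_bits x b) (xor_bits y b))"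
        using part_i[OF x y, of A] unfolding Sset_def .
    qed
  qed
qed (intro allI impI; (erule part_ii | erule part_iii))+

end
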